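(* Let $M,K$ be real anti-symmetric $m\times m$ matrices, $S:\mathbb R^m\to\mathbb R$ smooth, $A$ a real symmetric and $B$ a real anti-symmetric $m\times m$ matrix. Let $\mathbf z_h$ be a solution of the semi-discrete DG scheme described in the context. Suppose $d\mathbf z_h$ and $d\breve{\mathbf z}_h$ are continuously differentiable functions of $t$ with values in $\mathbf V_h$, each satisfying, for every $j$ and every $\boldsymbol\varphi\in\mathbf V_h$, the variational equation $$\int_{I_j}M\,\partial_t(d\mathbf z_h)\cdot\boldsymbol\varphi\,dx-\int_{I_j}K\,d\mathbf z_h\cdot\partial_x\boldsymbol\varphi\,dx+\big(\widehat{K d\mathbf z_h}\cdot\boldsymbol\varphi^-\big)_{j+\frac12}-\big(\widehat{K d\mathbf z_h}\cdot\boldsymbol\varphi^+\big)_{j-\frac12}=\int_{I_j}\nabla_{\mathbf z\mathbf z}S(\mathbf z_h)\,d\mathbf z_h\cdot\boldsymbol\varphi\,dx,$$ where $\widehat{K d\mathbf z_h}=K\{d\mathbf z_h\}+A[d\mathbf z_h]+B\,\partial_t[d\mathbf z_h]$ at each interface. Define $$\omega_{h,j}=\int_{I_j}M\,d\mathbf z_h\cdot d\breve{\mathbf z}_h\,dx+\tfrac12\big(B[d\breve{\mathbf z}_h]\cdot[d\mathbf z_h]\big)_{j+\frac12}+\tfrac12\big(B[d\breve{\mathbf z}_h]\cdot[d\mathbf z_h]\big)_{j-\frac12}$$ and, at each interface, $\mathcal F(d\mathbf z_h,d\breve{\mathbf z}_h)=\{K\,d\mathbf z_h\cdot d\breve{\mathbf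 z}_h\}-\widehat{K d\mathbf z_h}\cdot\{d\breve{\mathbf z}_h\}+\widehat{K d\breve{\mathbf z}_h}\cdot\{d\mathbf z_h\}$. Then for every $j$, $$\frac{d}{dt}\omega_{h,j}-\mathcal F(d\mathbf z_h,d\breve{\mathbf z}_h)_{j+\frac12}+\mathcal F(d\mathbf z_h,d\breve{\mathbf z}_h)_{j-\frac12}=0.$$
   Context: Mesh and spaces: a one-dimensional domain $\Omega$ is partitioned into cells $I_j=[x_{j-1/2},x_{j+1/2}]$, $j=1,\dots,N$, with periodic boundary conditions (interface indices taken modulo $N$). For fixed $k\ge 0$, $V_h=\{v\in L^2(\Omega): v|_{I_j}\text{ is a polynomial of degree}\le k\ \forall j\}$ and $\mathbf V_h=(V_h)^m$. For $\mathbf v\in\mathbf V_h$, $\mathbf v^+_{j+1/2}$ and $\mathbf v^-_{j+1/2}$ are its right and left limits at $x_{j+1/2}$; $\{\mathbf v\}=\frac12(\mathbf v^++\mathbf v^-)$, $[\mathbf v]=\mathbf v^+-\mathbf v^-$, and $\{K\mathbf v\cdot\mathbf w\}=\frac12(K\mathbf v^+\cdot\mathbf w^++K\mathbf v^-\cdot\mathbf w^-)$. Subscript $j\pm\frac12$ means evaluation at $x_{j\pm1/2}$. The semi-discrete DG scheme: find $\mathbf z_h(t)\in\mathbf V_h$, continuously differentiable in $t$, such that for all $j$ and all $\boldsymbol\varphi\in\mathbf V_h$, $$\int_{I_j}M\partial_t\mathbf z_h\cdot\boldsymbol\varphi\,dx-\int_{I_j}K\mathbf z_h\cdot\partial_x\boldsymbol\varphi\,dx+\big(\widehat{K\mathbf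 z_h}\cdot\boldsymbol\varphi^-\big)_{j+\frac12}-\big(\widehat{K\mathbf z_h}\cdot\boldsymbol\varphi^+\big)_{j-\frac12}=\int_{I_j}\nabla_{\mathbf z}S(\mathbf z_h)\cdot\boldsymbol\varphi\,dx,$$ with numerical flux $\widehat{K\mathbf z_h}=K\{\mathbf z_h\}+A[\mathbf z_h]+B\,\partial_t[\mathbf z_h]$ at each interface. This is a discretization of the multi-symplectic Hamiltonian PDE $M\mathbf z_t+K\mathbf z_x=\nabla_{\mathbf z}S(\mathbf z)$. $\nabla_{\mathbf z\mathbf z}S$ is the Hessian of $S$. *)

theory Defs
  imports "HOL-Analysis.Analysis"
begin

definition pdiff :: "(real^'m \<Rightarrow> real) \<Rightarrow> 'm \<Rightarrow> real^'m \<Rightarrow> real" where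
  "pdiff f i z = deriv (\<lambda>s. f (z + s *\<^sub>R axis i 1)) 0"

fun iter_pdiff :: "(real^'m \<Rightarrow> real) \<Rightarrow> 'm list \<Rightarrow> real^'m \<Rightarrow> real" where
  "iter_pdiff f [] = f"
| "iter_pdiff f (i # is) = pdiff (iter_pdiff f is) i"

definition smooth_fun :: "(real^'m \<Rightarrow> real) \<Rightarrow> bool" where
  "smooth_fun f \<longleftrightarrow> (\<forall>is z. iter_pdiff f is differentiable (at z))"

definition grad :: "(real^'m \<Rightarrow> real) \<Rightarrow> real^'m \<Rightarrow> real^'m" where
  "grad f z = (\<chi> i. pdiff f i z)"

definition hess :: "(real^'m \<Rightarrow> real) \<Rightarrow> real^'m \<Rightarrow> real^'m^'m" where
  "hess f z = (\<chi> i j. pdiff (pdiff f i) j z)"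

text \<open>Cells are indexed 0..N-1, cell j is [xs j, xs (Suc j)].  An element of V_h is given
  by coefficients a j n (cell j, monomial x^n, n \<le> k).  Interface r (r < N) is the
  right end of cell r, i.e. x_{r+1/2}; by periodicity its right neighbour is cell (Suc r mod N).\<close>

definition pv :: "nat \<Rightarrow> (nat \<Rightarrow> real^'m) \<Rightarrow> real \<Rightarrow> real^'m" where
  "pv k a x = (\<Sum>n\<le>k. (x ^ n) *\<^sub>R a n)"

definition vminus :: "nat \<Rightarrow> (nat \<Rightarrow> real) \<Rightarrow> (nat \<Rightarrow> nat \<Rightarrow> real^'m) \<Rightarrow> nat \<Rightarrow> real^'m" where
  "vminus k xs a r = pv k (a r) (xs (Suc r))"

definition vplus :: "nat \<Rightarrow> nat \<Rightarrow> (nat \<Rightarrow> real) \<Rightarrow> (nat \<Rightarrow> nat \<Rightarrow> real^'m) \<Rightarrow> nat \<Rightarrow> real^'m" where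
  "vplus k N xs a r = pv k (a (Suc r mod N)) (xs (Suc r mod N))"

definition avg :: "nat \<Rightarrow> nat \<Rightarrow> (nat \<Rightarrow> real) \<Rightarrow> (nat \<Rightarrow> nat \<Rightarrow> real^'m) \<Rightarrow> nat \<Rightarrow> real^'m" where
  "avg k N xs a r = (1/2) *\<^sub>R (vplus k N xs a r + vminus k xs a r)"

definition jump :: "nat \<Rightarrow> nat \<Rightarrow> (nat \<Rightarrow> real) \<Rightarrow> (nat \<Rightarrow> nat \<Rightarrow> real^'m) \<Rightarrow> nat \<Rightarrow> real^'m" where
  "jump k N xs a r = vplus k N xs a r - vminus k xs a r"

definition avgK :: "nat \<Rightarrow> nat \<Rightarrow> (nat \<Rightarrow> real) \<Rightarrow> real^'m^'m \<Rightarrow> (nat \<Rightarrow> nat \<Rightarrow> real^'m)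
    \<Rightarrow> (nat \<Rightarrow> nat \<Rightarrow> real^'m) \<Rightarrow> nat \<Rightarrow> real" where
  "avgK k N xs K a b r = (1/2) * ((K *v vplus k N xs a r) \<bullet> vplus k N xs b r
                                 + (K *v vminus k xs a r) \<bullet> vminus k xs b r)"

definition leftif :: "nat \<Rightarrow> nat \<Rightarrow> nat" where
  "leftif N j = (j + N - 1) mod N"

definition flux :: "nat \<Rightarrow> nat \<Rightarrow> (nat \<Rightarrow> real) \<Rightarrow> real^'m^'m \<Rightarrow> real^'m^'m \<Rightarrow> real^'m^'m
    \<Rightarrow> (real \<Rightarrow> nat \<Rightarrow> nat \<Rightarrow> real^'m) \<Rightarrow> real \<Rightarrow> nat \<Rightarrow> real^'m" where
  "flux k N xs K A B c t r =
     K *v avg k N xs (c t) r + A *v jump k N xs (c t) r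
     + B *v vector_derivative (\<lambda>s. jump k N xs (c s) r) (at t)"

definition dg_lhs :: "nat \<Rightarrow> nat \<Rightarrow> (nat \<Rightarrow> real) \<Rightarrow> real^'m^'m \<Rightarrow> real^'m^'m \<Rightarrow> real^'m^'m
    \<Rightarrow> real^'m^'m \<Rightarrow> (real \<Rightarrow> nat \<Rightarrow> nat \<Rightarrow> real^'m) \<Rightarrow> (nat \<Rightarrow> nat \<Rightarrow> real^'m)
    \<Rightarrow> real \<Rightarrow> nat \<Rightarrow> real" where
  "dg_lhs k N xs M K A B c phi t j =
     integral {xs j..xs (Suc j)}
       (\<lambda>x. (M *v vector_derivative (\<lambda>s. pv k (c s j) x) (at t)) \<bullet> pv k (phi j) x)
   - integral {xs j..xs (Suc j)}
       (\<lambda>x. (K *v pv k (c t j) x) \<bullet> vector_derivative (\<lambda>y. pv k (phi j) y) (at x))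
   + flux k N xs K A B c t j \<bullet> vminus k xs phi j
   - flux k N xs K A B c t (leftif N j) \<bullet> vplus k N xs phi (leftif N j)"

definition omega :: "nat \<Rightarrow> nat \<Rightarrow> (nat \<Rightarrow> real) \<Rightarrow> real^'m^'m \<Rightarrow> real^'m^'m
    \<Rightarrow> (real \<Rightarrow> nat \<Rightarrow> nat \<Rightarrow> real^'m) \<Rightarrow> (real \<Rightarrow> nat \<Rightarrow> nat \<Rightarrow> real^'m) \<Rightarrow> real \<Rightarrow> nat \<Rightarrow> real" where
  "omega k N xs M B c d t j =
     integral {xs j..xs (Suc j)} (\<lambda>x. (M *v pv k (c t j) x) \<bullet> pv k (d t j) x)
   + (1/2) * ((B *v jump k N xs (d t) j) \<bullet> jump k N xs (c t) j)
   + (1/2) * ((B *v jump k N xs (d t) (leftif N j)) \<bullet> jump k N xs (c t) (leftif N j))"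

definition Fcal :: "nat \<Rightarrow> nat \<Rightarrow> (nat \<Rightarrow> real) \<Rightarrow> real^'m^'m \<Rightarrow> real^'m^'m \<Rightarrow> real^'m^'m
    \<Rightarrow> (real \<Rightarrow> nat \<Rightarrow> nat \<Rightarrow> real^'m) \<Rightarrow> (real \<Rightarrow> nat \<Rightarrow> nat \<Rightarrow> real^'m) \<Rightarrow> real \<Rightarrow> nat \<Rightarrow> real" where
  "Fcal k N xs K A B c d t r =
     avgK k N xs K (c t) (d t) r
   - flux k N xs K A B c t r \<bullet> avg k N xs (d t) r
   + flux k N xs K A B d t r \<bullet> avg k N xs (c t) r"

end

theory Submission
  imports Defs
begin


lemma dirderiv:
  fixes f :: "real^'m \<Rightarrow> real"
  assumes "f differentiable (at (w + s0 *\<^sub>R v))"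
  shows "((\<lambda>s. f (w + s *\<^sub>R v)) has_real_derivative (frechet_derivative f (at (w + s0 *\<^sub>R v)) v)) (at s0)"
proof -
  let ?y = "w + s0 *\<^sub>R v"
  let ?F = "frechet_derivative f (at ?y)"
  have f: "(f has_derivative ?F) (at ?y)" using assms frechet_derivative_works by blast
  have g: "((\<lambda>s. w + s *\<^sub>R v) has_derivative (\<lambda>h. h *\<^sub>R v)) (at s0)"
    by (auto intro!: derivative_eq_intros)
  have "((\<lambda>s. f (w + s *\<^sub>R v)) has_derivative (\<lambda>h. ?F (h *\<^sub>R v))) (at s0)"
    using has_derivative_compose[OF g f] by simp
  moreover have "(\<lambda>h. ?F (h *\<^sub>R v)) = (*) (?F v)"
    using has_derivative_linear[OF f] by (auto simp add: linear_scale mult.commute)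
  ultimately show ?thesis unfolding has_field_derivative_def by simp
qed

lemma pdiff_eq:
  fixes f :: "real^'m \<Rightarrow> real"
  assumes "f differentiable (at y)"
  shows "pdiff f i y = frechet_derivative f (at y) (axis i 1)"
  using dirderiv[of f y 0 "axis i 1"] assms unfolding pdiff_def
  by (simp add: DERIV_imp_deriv)

lemma pdiff_line:
  fixes f :: "real^'m \<Rightarrow> real"
  assumes "\<And>y. f differentiable (at y)"
  shows "((\<lambda>s. f (w + s *\<^sub>R axis i 1)) has_real_derivative pdiff f i (w + s0 *\<^sub>R axis i 1)) (at s0)"
  using dirderiv[of f w s0 "axis i 1"] assms pdiff_eq by metis

lemma schwarz_mvt:
  fixes f :: "real^'m \<Rightarrow> real"
  assumes d0: "\<And>y. f differentiable (at y)" and d1: "\<And>y. pdiff f i differentiable (at y)"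
    and h: "h > 0"
  shows "\<exists>a b. 0 < a \<and> a < h \<and> 0 < b \<and> b < h \<and>
     f (z + h *\<^sub>R axis i 1 + h *\<^sub>R axis j 1) - f (z + h *\<^sub>R axis i 1) - f (z + h *\<^sub>R axis j 1) + f z
     = h * h * pdiff (pdiff f i) j (z + a *\<^sub>R axis i 1 + b *\<^sub>R axis j 1)"
proof -
  let ?ei = "axis i (1::real) :: real^'m" and ?ej = "axis j (1::real) :: real^'m"
  define phi where "phi s = f ((z + h *\<^sub>R ?ej) + s *\<^sub>R ?ei) - f (z + s *\<^sub>R ?ei)" for s
  have "\<And>s. 0 \<le> s \<Longrightarrow> s \<le> h \<Longrightarrow> DERIV phi s :> (pdiff f i ((z + h *\<^sub>R ?ej) + s *\<^sub>R ?ei) - pdiff f i (z + s *\<^sub>R ?ei))"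
    unfolding phi_def by (auto intro!: DERIV_diff pdiff_line d0)
  from MVT2[OF h this] obtain a where a: "0 < a" "a < h"
    and ea: "phi h - phi 0 = (h - 0) * (pdiff f i ((z + h *\<^sub>R ?ej) + a *\<^sub>R ?ei) - pdiff f i (z + a *\<^sub>R ?ei))"
    by blast
  define psi where "psi t = pdiff f i ((z + a *\<^sub>R ?ei) + t *\<^sub>R ?ej)" for t
  have "\<And>s. 0 \<le> s \<Longrightarrow> s \<le> h \<Longrightarrow> DERIV psi s :> pdiff (pdiff f i) j ((z + a *\<^sub>R ?ei) + s *\<^sub>R ?ej)"
    unfolding psi_def by (auto intro!: pdiff_line d1)
  from MVT2[OF h this] obtain b where b: "0 < b" "b < h"
    and eb: "psi h - psi 0 = (h - 0) * pdiff (pdiff f i) j ((z + a *\<^sub>R ?ei) + b *\<^sub>R ?ej)"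
    by blast
  have "f (z + h *\<^sub>R ?ei + h *\<^sub>R ?ej) - f (z + h *\<^sub>R ?ei) - f (z + h *\<^sub>R ?ej) + f z = phi h - phi 0"
    unfolding phi_def by (simp add: algebra_simps)
  also have "\<dots> = h * (psi h - psi 0)" using ea unfolding psi_def by (simp add: algebra_simps)
  also have "\<dots> = h * h * pdiff (pdiff f i) j (z + a *\<^sub>R ?ei + b *\<^sub>R ?ej)" using eb by simp
  finally show ?thesis using a b by blast
qed

lemma smooth_diffs:
  assumes "smooth_fun f"
  shows "f differentiable (at y)" "pdiff f i differentiable (at y)"
    "pdiff (pdiff f i) j differentiable (at y)"
  using assms unfolding smooth_fun_def
  by (metis iter_pdiff.simps)+

lemma schwarz:
  fixes f :: "real^'m \<Rightarrow> real"
  assumes sm: "smooth_fun f"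
  shows "pdiff (pdiff f i) j z = pdiff (pdiff f j) i z"
proof (rule ccontr)
  let ?ei = "axis i (1::real) :: real^'m" and ?ej = "axis j (1::real) :: real^'m"
  let ?g1 = "pdiff (pdiff f i) j" and ?g2 = "pdiff (pdiff f j) i"
  assume ne: "?g1 z \<noteq> ?g2 z"
  define e where "e = \<bar>?g1 z - ?g2 z\<bar> / 3"
  have e: "e > 0" using ne unfolding e_def by simp
  have c1: "continuous (at z) ?g1" and c2: "continuous (at z) ?g2"
    using smooth_diffs(3)[OF sm] differentiable_imp_continuous_within by blast+
  obtain d1 where d1: "d1 > 0" "\<And>y. dist y z < d1 \<Longrightarrow> dist (?g1 y) (?g1 z) < e"
    using c1 e unfolding continuous_at_eps_delta by blast
  obtain d2 where d2: "d2 > 0" "\<And>y. dist y z < d2 \<Longrightarrow> dist (?g2 y) (?g2 z) < e"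
    using c2 e unfolding continuous_at_eps_delta by blast
  define h where "h = min d1 d2 / 3"
  have h: "h > 0" using d1 d2 unfolding h_def by simp
  obtain a b where ab: "0 < a" "a < h" "0 < b" "b < h" and
     E1: "f (z + h *\<^sub>R ?ei + h *\<^sub>R ?ej) - f (z + h *\<^sub>R ?ei) - f (z + h *\<^sub>R ?ej) + f z
     = h * h * ?g1 (z + a *\<^sub>R ?ei + b *\<^sub>R ?ej)"
    using schwarz_mvt[OF smooth_diffs(1)[OF sm] smooth_diffs(2)[OF sm] h] by blast
  obtain a' b' where ab': "0 < a'" "a' < h" "0 < b'" "b' < h" and
     E2: "f (z + h *\<^sub>R ?ej + h *\<^sub>R ?ei) - f (z + h *\<^sub>R ?ej) - f (z + h *\<^sub>R ?ei) + f z
     = h * h * ?g2 (z + a' *\<^sub>R ?ej + b' *\<^sub>R ?ei)"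
    using schwarz_mvt[OF smooth_diffs(1)[OF sm] smooth_diffs(2)[OF sm] h] by blast
  have "z + h *\<^sub>R ?ej + h *\<^sub>R ?ei = z + h *\<^sub>R ?ei + h *\<^sub>R ?ej" by (simp add: algebra_simps)
  note E2' = E2[unfolded this]
  have "h * h * ?g1 (z + a *\<^sub>R ?ei + b *\<^sub>R ?ej) = h * h * ?g2 (z + a' *\<^sub>R ?ej + b' *\<^sub>R ?ei)"
    using E1 E2' by linarith
  then have eq: "?g1 (z + a *\<^sub>R ?ei + b *\<^sub>R ?ej) = ?g2 (z + a' *\<^sub>R ?ej + b' *\<^sub>R ?ei)"
    using h by simp
  have n1: "dist (z + a *\<^sub>R ?ei + b *\<^sub>R ?ej) z < d1"
  proof -
    have "dist (z + a *\<^sub>R ?ei + b *\<^sub>R ?ej) z = norm (a *\<^sub>R ?ei + b *\<^sub>R ?ej)"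
      by (simp add: dist_norm)
    also have "\<dots> \<le> norm (a *\<^sub>R ?ei) + norm (b *\<^sub>R ?ej)" by (rule norm_triangle_ineq)
    also have "\<dots> = a + b" using ab by simp
    finally show ?thesis using ab d1 d2 unfolding h_def by linarith
  qed
  have n2: "dist (z + a' *\<^sub>R ?ej + b' *\<^sub>R ?ei) z < d2"
  proof -
    have "dist (z + a' *\<^sub>R ?ej + b' *\<^sub>R ?ei) z = norm (a' *\<^sub>R ?ej + b' *\<^sub>R ?ei)"
      by (simp add: dist_norm)
    also have "\<dots> \<le> norm (a' *\<^sub>R ?ej) + norm (b' *\<^sub>R ?ei)" by (rule norm_triangle_ineq)
    also have "\<dots> = a' + b'" using ab' by simp
    finally show ?thesis using ab' d1 d2 unfolding h_def by linarith
  qed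
  have "\<bar>?g1 z - ?g2 z\<bar> < 2 * e"
    using d1(2)[OF n1] d2(2)[OF n2] eq unfolding dist_real_def by linarith
  then show False unfolding e_def using ne by simp
qed

lemma hess_sym:
  fixes S :: "real^'m \<Rightarrow> real"
  assumes "smooth_fun S"
  shows "(hess S z *v u) \<bullet> v = (hess S z *v v) \<bullet> u"
proof -
  have T: "transpose (hess S z) = hess S z"
    unfolding transpose_def hess_def using schwarz[OF assms] by (simp add: vec_eq_iff)
  have "(hess S z *v u) \<bullet> v = (u v* transpose (hess S z)) \<bullet> v" by simp
  also have "\<dots> = u \<bullet> (transpose (hess S z) *v v)" by (rule dot_lmul_matrix)
  also have "\<dots> = (hess S z *v v) \<bullet> u" using T by (simp add: inner_commute)
  finally show ?thesis .
qed

lemma anti_inner: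
  fixes K :: "real^'m^'m"
  assumes "transpose K = - K"
  shows "(K *v a) \<bullet> b = - ((K *v b) \<bullet> a)"
proof -
  have "(K *v a) \<bullet> b = (a v* transpose K) \<bullet> b" by simp
  also have "\<dots> = a \<bullet> (transpose K *v b)" by (rule dot_lmul_matrix)
  also have "\<dots> = - ((K *v b) \<bullet> a)"
  proof -
    have "(-K) *v b = -(K *v b)" by (simp add: vec_eq_iff matrix_vector_mult_def sum_negf)
    then show ?thesis using assms by (simp add: inner_commute)
  qed
  finally show ?thesis .
qed

lemma sym_inner:
  fixes K :: "real^'m^'m"
  assumes "transpose K = K"
  shows "(K *v a) \<bullet> b = (K *v b) \<bullet> a"
proof -
  have "(K *v a) \<bullet> b = (a v* transpose K) \<bullet> b" by simp
  also have "\<dots> = a \<bullet> (transpose K *v b)" by (rule dot_lmul_matrix)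
  also have "\<dots> = (K *v b) \<bullet> a" using assms by (simp add: inner_commute)
  finally show ?thesis .
qed



definition pvd :: "nat \<Rightarrow> (nat \<Rightarrow> real^'m) \<Rightarrow> real \<Rightarrow> real^'m" where
  "pvd k a x = (\<Sum>n\<le>k. (real n * x ^ (n - Suc 0)) *\<^sub>R a n)"

lemma pv_hvd_x: "((\<lambda>y. pv k a y) has_vector_derivative pvd k a x) (at x within S)"
  unfolding pv_def pvd_def
  by (intro has_vector_derivative_sum has_vector_derivative_scaleR[where g'=0, simplified]
        DERIV_pow derivative_intros)

lemma vd_pv_x: "vector_derivative (\<lambda>y. pv k a y) (at x) = pvd k a x"
  using pv_hvd_x vector_derivative_at by blast

lemma pv_hvd_t:
  assumes "\<And>n. ((\<lambda>s. c s n) has_vector_derivative c' n) (at t)"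
  shows "((\<lambda>s. pv k (c s) x) has_vector_derivative pv k c' x) (at t)"
  unfolding pv_def
  by (intro has_vector_derivative_sum has_vector_derivative_scaleR[where f'=0, simplified]
        assms derivative_intros)

lemma bl_mv: "bounded_linear ((*v) (M::real^'m^'m))"
  by (simp add: linear_conv_bounded_linear matrix_vector_mul_linear)

lemma bil_deriv:
  fixes M :: "real^'m^'m" and f g :: "real \<Rightarrow> real^'m"
  assumes f: "(f has_vector_derivative f') (at t within S)"
    and g: "(g has_vector_derivative g') (at t within S)"
  shows "((\<lambda>s. (M *v f s) \<bullet> g s) has_real_derivative ((M *v f') \<bullet> g t + (M *v f t) \<bullet> g')) (at t within S)"
proof -
  have Mf: "((\<lambda>s. M *v f s) has_derivative (\<lambda>h. M *v (h *\<^sub>R f'))) (at t within S)"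
    using bounded_linear.has_derivative[OF bl_mv f[unfolded has_vector_derivative_def]] .
  have "((\<lambda>s. (M *v f s) \<bullet> g s) has_derivative
      (\<lambda>h. (M *v f t) \<bullet> (h *\<^sub>R g') + (M *v (h *\<^sub>R f')) \<bullet> g t)) (at t within S)"
    using has_derivative_inner[OF Mf g[unfolded has_vector_derivative_def]] .
  then show ?thesis unfolding has_field_derivative_def
    by (rule has_derivative_eq_rhs)
       (auto simp: fun_eq_iff matrix_vector_mult_scaleR algebra_simps)
qed

lemma cont_mv: "continuous_on S f \<Longrightarrow> continuous_on S (\<lambda>x. (M::real^'m^'m) *v f x)"
  using bounded_linear.continuous_on[OF bl_mv] by blast

lemma cont_pv: "continuous_on S (\<lambda>x. pv k a x)"
  unfolding pv_def by (intro continuous_intros)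

lemma cont_pvd: "continuous_on S (\<lambda>x. pvd k a x)"
  unfolding pvd_def by (intro continuous_intros)

lemma ftc_K:
  fixes K :: "real^'m^'m"
  assumes "a \<le> b"
  shows "integral {a..b} (\<lambda>x. (K *v pv k p x) \<bullet> pvd k q x)
       + integral {a..b} (\<lambda>x. (K *v pvd k p x) \<bullet> pv k q x)
       = (K *v pv k p b) \<bullet> pv k q b - (K *v pv k p a) \<bullet> pv k q a"
proof -
  have "((\<lambda>x. (K *v pvd k p x) \<bullet> pv k q x + (K *v pv k p x) \<bullet> pvd k q x) has_integral
      ((K *v pv k p b) \<bullet> pv k q b - (K *v pv k p a) \<bullet> pv k q a)) {a..b}"
  proof (rule fundamental_theorem_of_calculus[OF assms])
    fix x
    show "((\<lambda>x. (K *v pv k p x) \<bullet> pv k q x) has_vector_derivative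
       ((K *v pvd k p x) \<bullet> pv k q x + (K *v pv k p x) \<bullet> pvd k q x)) (at x within {a..b})"
      unfolding has_real_derivative_iff_has_vector_derivative[symmetric]
      by (rule bil_deriv[OF pv_hvd_x[of k p] pv_hvd_x[of k q]])
  qed
  then have I: "integral {a..b} (\<lambda>x. (K *v pvd k p x) \<bullet> pv k q x + (K *v pv k p x) \<bullet> pvd k q x)
     = (K *v pv k p b) \<bullet> pv k q b - (K *v pv k p a) \<bullet> pv k q a" by (rule integral_unique)
  have i1: "(\<lambda>x. (K *v pvd k p x) \<bullet> pv k q x) integrable_on {a..b}"
    by (intro integrable_continuous_interval continuous_intros cont_mv cont_pv cont_pvd)
  have i2: "(\<lambda>x. (K *v pv k p x) \<bullet> pvd k q x) integrable_on {a..b}"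
    by (intro integrable_continuous_interval continuous_intros cont_mv cont_pv cont_pvd)
  show ?thesis using I integral_add[OF i1 i2] by simp
qed

lemma pt_expand:
  fixes M :: "real^'m^'m"
  shows "(M *v pv k p x) \<bullet> pv k q x = (\<Sum>n\<le>k. \<Sum>m\<le>k. x ^ (n + m) * ((M *v p n) \<bullet> q m))"
proof -
  have "M *v pv k p x = (\<Sum>n\<le>k. x ^ n *\<^sub>R (M *v p n))"
  proof -
    have sc: "\<And>c v. M *v (c *\<^sub>R v) = c *\<^sub>R (M *v v)"
      by (simp add: vec_eq_iff matrix_vector_mult_def sum_distrib_left mult_ac)
    have "M *v (\<Sum>n\<le>k. x ^ n *\<^sub>R p n) = (\<Sum>n\<le>k. M *v (x ^ n *\<^sub>R p n))"
      using linear_sum[OF matrix_vector_mul_linear, of M] by (simp add: o_def)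
    then show ?thesis unfolding pv_def sc .
  qed
  then have "(M *v pv k p x) \<bullet> pv k q x = (\<Sum>n\<le>k. x ^ n *\<^sub>R (M *v p n)) \<bullet> (\<Sum>m\<le>k. x ^ m *\<^sub>R q m)"
    by (simp add: pv_def)
  also have "\<dots> = (\<Sum>n\<le>k. \<Sum>m\<le>k. x ^ (n + m) * ((M *v p n) \<bullet> q m))"
    unfolding inner_sum_left inner_sum_right by (simp add: power_add mult_ac) (subst sum.swap, simp add: mult_ac)
  finally show ?thesis .
qed

lemma int_expand:
  fixes M :: "real^'m^'m"
  shows "integral {a..b} (\<lambda>x. (M *v pv k p x) \<bullet> pv k q x)
    = (\<Sum>n\<le>k. \<Sum>m\<le>k. integral {a..b} (\<lambda>x. x ^ (n + m)) * ((M *v p n) \<bullet> q m))"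
proof -
  have "integral {a..b} (\<lambda>x. (M *v pv k p x) \<bullet> pv k q x)
     = integral {a..b} (\<lambda>x. \<Sum>n\<le>k. \<Sum>m\<le>k. x ^ (n + m) * ((M *v p n) \<bullet> q m))"
    by (simp only: pt_expand)
  also have "\<dots> = (\<Sum>n\<le>k. integral {a..b} (\<lambda>x. \<Sum>m\<le>k. x ^ (n + m) * ((M *v p n) \<bullet> q m)))"
    by (rule integral_sum) (auto intro!: integrable_sum integrable_continuous_interval continuous_intros)
  also have "\<dots> = (\<Sum>n\<le>k. \<Sum>m\<le>k. integral {a..b} (\<lambda>x. x ^ (n + m) * ((M *v p n) \<bullet> q m)))"
    by (intro sum.cong refl integral_sum) (auto intro!: integrable_continuous_interval continuous_intros)
  finally show ?thesis by simp
qed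



lemma iface_alg:
  fixes K A B :: "real^'m^'m" and up um vp vm du dv :: "real^'m"
  assumes K: "transpose K = - K" and A: "transpose A = A" and B: "transpose B = - B"
  defines "hU \<equiv> K *v ((1/2) *\<^sub>R (up + um)) + A *v (up - um) + B *v du"
      and "hV \<equiv> K *v ((1/2) *\<^sub>R (vp + vm)) + A *v (vp - vm) + B *v dv"
  defines "F \<equiv> (1/2) * ((K *v up) \<bullet> vp + (K *v um) \<bullet> vm) - hU \<bullet> ((1/2) *\<^sub>R (vp + vm))
               + hV \<bullet> ((1/2) *\<^sub>R (up + um))"
  shows "(K *v um) \<bullet> vm - hU \<bullet> vm + hV \<bullet> um
           + (1/2) * ((B *v dv) \<bullet> (up - um) + (B *v (vp - vm)) \<bullet> du) = F"
    and "- ((K *v up) \<bullet> vp) + hU \<bullet> vp - hV \<bullet> up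
           + (1/2) * ((B *v dv) \<bullet> (up - um) + (B *v (vp - vm)) \<bullet> du) = - F"
proof -
  have f: "(K *v vp) \<bullet> up = - ((K *v up) \<bullet> vp)" "(K *v vp) \<bullet> um = - ((K *v um) \<bullet> vp)"
    "(K *v vm) \<bullet> up = - ((K *v up) \<bullet> vm)" "(K *v vm) \<bullet> um = - ((K *v um) \<bullet> vm)"
    "(A *v vp) \<bullet> up = (A *v up) \<bullet> vp" "(A *v vp) \<bullet> um = (A *v um) \<bullet> vp"
    "(A *v vm) \<bullet> up = (A *v up) \<bullet> vm" "(A *v vm) \<bullet> um = (A *v um) \<bullet> vm"
    "(B *v vp) \<bullet> du = - ((B *v du) \<bullet> vp)" "(B *v vm) \<bullet> du = - ((B *v du) \<bullet> vm)"
    using anti_inner[OF K] sym_inner[OF A] anti_inner[OF B] by blast+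
  show "(K *v um) \<bullet> vm - hU \<bullet> vm + hV \<bullet> um
           + (1/2) * ((B *v dv) \<bullet> (up - um) + (B *v (vp - vm)) \<bullet> du) = F"
    unfolding F_def hU_def hV_def
    apply (simp add: algebra_simps inner_add_left inner_add_right inner_diff_left inner_diff_right)
    using f by linarith
  show "- ((K *v up) \<bullet> vp) + hU \<bullet> vp - hV \<bullet> up
           + (1/2) * ((B *v dv) \<bullet> (up - um) + (B *v (vp - vm)) \<bullet> du) = - F"
    unfolding F_def hU_def hV_def
    apply (simp add: algebra_simps inner_add_left inner_add_right inner_diff_left inner_diff_right)
    using f by linarith
qed



lemma C1_hvd:
  assumes "f C1_differentiable_on T" "t \<in> T"
  shows "(f has_vector_derivative vector_derivative f (at t)) (at t)"
proof -
  obtain D where "(f has_vector_derivative D t) (at t)"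
    using assms unfolding C1_differentiable_on_def by blast
  then show ?thesis using vector_derivative_works differentiableI_vector by blast
qed

lemma leftif_suc: "j < N \<Longrightarrow> Suc (leftif N j) mod N = j"
proof -
  assume j: "j < N"
  then have "Suc (leftif N j) mod N = Suc (j + N - 1) mod N"
    unfolding leftif_def by (simp add: mod_Suc_eq)
  also have "Suc (j + N - 1) = j + N" using j by simp
  finally show ?thesis using j by simp
qed

lemma coeff_derivs:
  fixes c :: "real \<Rightarrow> nat \<Rightarrow> nat \<Rightarrow> real^'m"
  assumes C1: "\<forall>j n. (\<lambda>t. c t j n) C1_differentiable_on T" and t: "t \<in> T"
  defines "Dc \<equiv> (\<lambda>i n. vector_derivative (\<lambda>s. c s i n) (at t))"
  shows "\<And>i x. ((\<lambda>s. pv k (c s i) x) has_vector_derivative pv k (Dc i) x) (at t)"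
    and "\<And>i x. vector_derivative (\<lambda>s. pv k (c s i) x) (at t) = pv k (Dc i) x"
    and "\<And>r. ((\<lambda>s. jump k N xs (c s) r) has_vector_derivative jump k N xs Dc r) (at t)"
    and "\<And>r. vector_derivative (\<lambda>s. jump k N xs (c s) r) (at t) = jump k N xs Dc r"
proof -
  have h: "\<And>i n. ((\<lambda>s. c s i n) has_vector_derivative Dc i n) (at t)"
    unfolding Dc_def using C1_hvd C1 t by blast
  show p: "\<And>i x. ((\<lambda>s. pv k (c s i) x) has_vector_derivative pv k (Dc i) x) (at t)"
    by (rule pv_hvd_t, rule h)
  show "\<And>i x. vector_derivative (\<lambda>s. pv k (c s i) x) (at t) = pv k (Dc i) x"
    using p vector_derivative_at by blast
  show q: "\<And>r. ((\<lambda>s. jump k N xs (c s) r) has_vector_derivative jump k N xs Dc r) (at t)"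
    unfolding jump_def vplus_def vminus_def by (intro has_vector_derivative_diff p)
  show "\<And>r. vector_derivative (\<lambda>s. jump k N xs (c s) r) (at t) = jump k N xs Dc r"
    using q vector_derivative_at by blast
qed

lemma omega_deriv:
  fixes M B :: "real^'m^'m" and c d :: "real \<Rightarrow> nat \<Rightarrow> nat \<Rightarrow> real^'m"
  assumes hc: "\<And>i n. ((\<lambda>s. c s i n) has_vector_derivative Dc i n) (at t)"
    and hd: "\<And>i n. ((\<lambda>s. d s i n) has_vector_derivative Dd i n) (at t)"
    and jc: "\<And>r. ((\<lambda>s. jump k N xs (c s) r) has_vector_derivative jump k N xs Dc r) (at t)"
    and jd: "\<And>r. ((\<lambda>s. jump k N xs (d s) r) has_vector_derivative jump k N xs Dd r) (at t)"
  shows "((\<lambda>s. omega k N xs M B c d s j) has_real_derivative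
     (integral {xs j..xs (Suc j)} (\<lambda>x. (M *v pv k (Dc j) x) \<bullet> pv k (d t j) x)
    + integral {xs j..xs (Suc j)} (\<lambda>x. (M *v pv k (c t j) x) \<bullet> pv k (Dd j) x)
    + (1/2) * ((B *v jump k N xs Dd j) \<bullet> jump k N xs (c t) j + (B *v jump k N xs (d t) j) \<bullet> jump k N xs Dc j)
    + (1/2) * ((B *v jump k N xs Dd (leftif N j)) \<bullet> jump k N xs (c t) (leftif N j)
             + (B *v jump k N xs (d t) (leftif N j)) \<bullet> jump k N xs Dc (leftif N j)))) (at t)"
proof -
  define cc where "cc n m = integral {xs j..xs (Suc j)} (\<lambda>x. x ^ (n + m))" for n m
  have I: "(\<lambda>s. integral {xs j..xs (Suc j)} (\<lambda>x. (M *v pv k (c s j) x) \<bullet> pv k (d s j) x))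
     = (\<lambda>s. \<Sum>n\<le>k. \<Sum>m\<le>k. cc n m * ((M *v c s j n) \<bullet> d s j m))"
    unfolding cc_def by (simp add: int_expand)
  have dI: "((\<lambda>s. \<Sum>n\<le>k. \<Sum>m\<le>k. cc n m * ((M *v c s j n) \<bullet> d s j m)) has_real_derivative
      (\<Sum>n\<le>k. \<Sum>m\<le>k. cc n m * ((M *v Dc j n) \<bullet> d t j m + (M *v c t j n) \<bullet> Dd j m))) (at t)"
    by (intro DERIV_sum DERIV_cmult bil_deriv hc hd)
  have eqI: "(\<Sum>n\<le>k. \<Sum>m\<le>k. cc n m * ((M *v Dc j n) \<bullet> d t j m + (M *v c t j n) \<bullet> Dd j m))
     = integral {xs j..xs (Suc j)} (\<lambda>x. (M *v pv k (Dc j) x) \<bullet> pv k (d t j) x)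
     + integral {xs j..xs (Suc j)} (\<lambda>x. (M *v pv k (c t j) x) \<bullet> pv k (Dd j) x)"
    unfolding int_expand cc_def by (simp add: distrib_left sum.distrib)
  have dB1: "((\<lambda>s. (1/2) * ((B *v jump k N xs (d s) j) \<bullet> jump k N xs (c s) j)) has_real_derivative
     (1/2) * ((B *v jump k N xs Dd j) \<bullet> jump k N xs (c t) j + (B *v jump k N xs (d t) j) \<bullet> jump k N xs Dc j)) (at t)"
    by (intro DERIV_cmult bil_deriv jc jd)
  have dB2: "((\<lambda>s. (1/2) * ((B *v jump k N xs (d s) (leftif N j)) \<bullet> jump k N xs (c s) (leftif N j))) has_real_derivative
     (1/2) * ((B *v jump k N xs Dd (leftif N j)) \<bullet> jump k N xs (c t) (leftif N j)
             + (B *v jump k N xs (d t) (leftif N j)) \<bullet> jump k N xs Dc (leftif N j))) (at t)"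
    by (intro DERIV_cmult bil_deriv jc jd)
  have "((\<lambda>s. integral {xs j..xs (Suc j)} (\<lambda>x. (M *v pv k (c s j) x) \<bullet> pv k (d s j) x)
      + (1/2) * ((B *v jump k N xs (d s) j) \<bullet> jump k N xs (c s) j)
      + (1/2) * ((B *v jump k N xs (d s) (leftif N j)) \<bullet> jump k N xs (c s) (leftif N j))) has_real_derivative
     (integral {xs j..xs (Suc j)} (\<lambda>x. (M *v pv k (Dc j) x) \<bullet> pv k (d t j) x)
    + integral {xs j..xs (Suc j)} (\<lambda>x. (M *v pv k (c t j) x) \<bullet> pv k (Dd j) x)
    + (1/2) * ((B *v jump k N xs Dd j) \<bullet> jump k N xs (c t) j + (B *v jump k N xs (d t) j) \<bullet> jump k N xs Dc j)
    + (1/2) * ((B *v jump k N xs Dd (leftif N j)) \<bullet> jump k N xs (c t) (leftif N j)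
             + (B *v jump k N xs (d t) (leftif N j)) \<bullet> jump k N xs Dc (leftif N j)))) (at t)"
    by (intro DERIV_add dB1 dB2, unfold I, unfold eqI[symmetric], rule dI)
  then show ?thesis unfolding omega_def .
qed



theorem theorem3p1:
  fixes M K A B :: "real^'m^'m" and S :: "real^'m \<Rightarrow> real"
    and N k :: nat and xs :: "nat \<Rightarrow> real" and T :: "real set"
    and zc dc db :: "real \<Rightarrow> nat \<Rightarrow> nat \<Rightarrow> real^'m"
  assumes M_anti: "transpose M = - M" and K_anti: "transpose K = - K"
    and A_sym: "transpose A = A" and B_anti: "transpose B = - B"
    and S_smooth: "smooth_fun S"
    and N_pos: "N \<ge> 1" and mesh: "\<forall>j<N. xs j < xs (Suc j)"
    and T_open: "open T"
    and zc_C1: "\<forall>j n. (\<lambda>t. zc t j n) C1_differentiable_on T"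
    and dc_C1: "\<forall>j n. (\<lambda>t. dc t j n) C1_differentiable_on T"
    and db_C1: "\<forall>j n. (\<lambda>t. db t j n) C1_differentiable_on T"
    and zh_scheme: "\<forall>t\<in>T. \<forall>j<N. \<forall>phi.
        dg_lhs k N xs M K A B zc phi t j
        = integral {xs j..xs (Suc j)} (\<lambda>x. grad S (pv k (zc t j) x) \<bullet> pv k (phi j) x)"
    and dc_eq: "\<forall>t\<in>T. \<forall>j<N. \<forall>phi.
        dg_lhs k N xs M K A B dc phi t j
        = integral {xs j..xs (Suc j)}
            (\<lambda>x. (hess S (pv k (zc t j) x) *v pv k (dc t j) x) \<bullet> pv k (phi j) x)"
    and db_eq: "\<forall>t\<in>T. \<forall>j<N. \<forall>phi.
        dg_lhs k N xs M K A B db phi t j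
        = integral {xs j..xs (Suc j)}
            (\<lambda>x. (hess S (pv k (zc t j) x) *v pv k (db t j) x) \<bullet> pv k (phi j) x)"
  shows "\<forall>t\<in>T. \<forall>j<N.
    ((\<lambda>s. omega k N xs M B dc db s j) has_real_derivative
       (Fcal k N xs K A B dc db t j - Fcal k N xs K A B dc db t (leftif N j))) (at t)"
proof (intro ballI allI impI)
  fix t j assume t: "t \<in> T" and j: "j < N"
  define Dc where "Dc = (\<lambda>i n. vector_derivative (\<lambda>s. dc s i n) (at t))"
  define Db where "Db = (\<lambda>i n. vector_derivative (\<lambda>s. db s i n) (at t))"
  define l where "l = leftif N j"
  have lj: "Suc l mod N = j" unfolding l_def using leftif_suc j .
  note cD = coeff_derivs[OF dc_C1 t, folded Dc_def]
  note bD = coeff_derivs[OF db_C1 t, folded Db_def]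
  have hc: "\<And>i n. ((\<lambda>s. dc s i n) has_vector_derivative Dc i n) (at t)"
    unfolding Dc_def using C1_hvd dc_C1 t by blast
  have hb: "\<And>i n. ((\<lambda>s. db s i n) has_vector_derivative Db i n) (at t)"
    unfolding Db_def using C1_hvd db_C1 t by blast
  have OD: "((\<lambda>s. omega k N xs M B dc db s j) has_real_derivative
     (integral {xs j..xs (Suc j)} (\<lambda>x. (M *v pv k (Dc j) x) \<bullet> pv k (db t j) x)
    + integral {xs j..xs (Suc j)} (\<lambda>x. (M *v pv k (dc t j) x) \<bullet> pv k (Db j) x)
    + (1/2) * ((B *v jump k N xs Db j) \<bullet> jump k N xs (dc t) j + (B *v jump k N xs (db t) j) \<bullet> jump k N xs Dc j)
    + (1/2) * ((B *v jump k N xs Db l) \<bullet> jump k N xs (dc t) l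
             + (B *v jump k N xs (db t) l) \<bullet> jump k N xs Dc l))) (at t)"
    unfolding l_def by (rule omega_deriv[OF hc hb cD(3) bD(3)])
  define a where "a = xs j"
  define b where "b = xs (Suc j)"
  have ab: "a \<le> b" unfolding a_def b_def using mesh j by (simp add: less_imp_le)
  define fu where "fu r = flux k N xs K A B dc t r" for r
  define fv where "fv r = flux k N xs K A B db t r" for r
  have E1: "integral {a..b} (\<lambda>x. (M *v pv k (Dc j) x) \<bullet> pv k (db t j) x)
     - integral {a..b} (\<lambda>x. (K *v pv k (dc t j) x) \<bullet> pvd k (db t j) x)
     + fu j \<bullet> pv k (db t j) b - fu l \<bullet> pv k (db t j) a
     = integral {a..b} (\<lambda>x. (hess S (pv k (zc t j) x) *v pv k (dc t j) x) \<bullet> pv k (db t j) x)"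
  proof -
    have e: "dg_lhs k N xs M K A B dc (db t) t j = integral {xs j..xs (Suc j)}
            (\<lambda>x. (hess S (pv k (zc t j) x) *v pv k (dc t j) x) \<bullet> pv k (db t j) x)"
      using dc_eq t j by blast
    then show ?thesis
      by (simp add: dg_lhs_def cD(2) vd_pv_x vminus_def vplus_def leftif_suc[OF j] fu_def l_def a_def b_def Dc_def)
  qed
  have E2: "integral {a..b} (\<lambda>x. (M *v pv k (Db j) x) \<bullet> pv k (dc t j) x)
     - integral {a..b} (\<lambda>x. (K *v pv k (db t j) x) \<bullet> pvd k (dc t j) x)
     + fv j \<bullet> pv k (dc t j) b - fv l \<bullet> pv k (dc t j) a
     = integral {a..b} (\<lambda>x. (hess S (pv k (zc t j) x) *v pv k (db t j) x) \<bullet> pv k (dc t j) x)"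
  proof -
    have e: "dg_lhs k N xs M K A B db (dc t) t j = integral {xs j..xs (Suc j)}
            (\<lambda>x. (hess S (pv k (zc t j) x) *v pv k (db t j) x) \<bullet> pv k (dc t j) x)"
      using db_eq t j by blast
    then show ?thesis
      by (simp add: dg_lhs_def bD(2) vd_pv_x vminus_def vplus_def leftif_suc[OF j] fv_def l_def a_def b_def Db_def)
  qed
  have H: "(\<lambda>x. (hess S (pv k (zc t j) x) *v pv k (dc t j) x) \<bullet> pv k (db t j) x)
         = (\<lambda>x. (hess S (pv k (zc t j) x) *v pv k (db t j) x) \<bullet> pv k (dc t j) x)"
    by (rule ext, rule hess_sym[OF S_smooth])
  then have H': "integral {a..b} (\<lambda>x. (hess S (pv k (zc t j) x) *v pv k (dc t j) x) \<bullet> pv k (db t j) x)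
         = integral {a..b} (\<lambda>x. (hess S (pv k (zc t j) x) *v pv k (db t j) x) \<bullet> pv k (dc t j) x)"
    by simp
  have FTC: "integral {a..b} (\<lambda>x. (K *v pv k (dc t j) x) \<bullet> pvd k (db t j) x)
       + integral {a..b} (\<lambda>x. (K *v pvd k (dc t j) x) \<bullet> pv k (db t j) x)
       = (K *v pv k (dc t j) b) \<bullet> pv k (db t j) b - (K *v pv k (dc t j) a) \<bullet> pv k (db t j) a"
    by (rule ftc_K[OF ab])
  have AK: "integral {a..b} (\<lambda>x. (K *v pv k (db t j) x) \<bullet> pvd k (dc t j) x)
      = - integral {a..b} (\<lambda>x. (K *v pvd k (dc t j) x) \<bullet> pv k (db t j) x)"
  proof -
    have "(\<lambda>x. (K *v pv k (db t j) x) \<bullet> pvd k (dc t j) x) = (\<lambda>x. - ((K *v pvd k (dc t j) x) \<bullet> pv k (db t j) x))"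
      by (rule ext, rule anti_inner[OF K_anti])
    then show ?thesis by (simp only: integral_neg)
  qed
  have AM: "integral {a..b} (\<lambda>x. (M *v pv k (dc t j) x) \<bullet> pv k (Db j) x)
      = - integral {a..b} (\<lambda>x. (M *v pv k (Db j) x) \<bullet> pv k (dc t j) x)"
  proof -
    have "(\<lambda>x. (M *v pv k (dc t j) x) \<bullet> pv k (Db j) x) = (\<lambda>x. - ((M *v pv k (Db j) x) \<bullet> pv k (dc t j) x))"
      by (rule ext, rule anti_inner[OF M_anti])
    then show ?thesis by (simp only: integral_neg)
  qed
  have fu_eq: "fu r = K *v ((1/2) *\<^sub>R (vplus k N xs (dc t) r + vminus k xs (dc t) r))
      + A *v (vplus k N xs (dc t) r - vminus k xs (dc t) r) + B *v jump k N xs Dc r" for r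
    unfolding fu_def flux_def cD(4) unfolding avg_def jump_def by simp
  have fv_eq: "fv r = K *v ((1/2) *\<^sub>R (vplus k N xs (db t) r + vminus k xs (db t) r))
      + A *v (vplus k N xs (db t) r - vminus k xs (db t) r) + B *v jump k N xs Db r" for r
    unfolding fv_def flux_def bD(4) unfolding avg_def jump_def by simp
  have Fc: "Fcal k N xs K A B dc db t r =
     (1/2) * ((K *v vplus k N xs (dc t) r) \<bullet> vplus k N xs (db t) r + (K *v vminus k xs (dc t) r) \<bullet> vminus k xs (db t) r)
     - fu r \<bullet> ((1/2) *\<^sub>R (vplus k N xs (db t) r + vminus k xs (db t) r))
     + fv r \<bullet> ((1/2) *\<^sub>R (vplus k N xs (dc t) r + vminus k xs (dc t) r))" for r
    unfolding Fcal_def avgK_def avg_def fu_def fv_def by simp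
  note IR = iface_alg(1)[OF K_anti A_sym B_anti, where up="vplus k N xs (dc t) j" and um="vminus k xs (dc t) j" and du="jump k N xs Dc j" and vp="vplus k N xs (db t) j" and vm="vminus k xs (db t) j" and dv="jump k N xs Db j"]
  note IL = iface_alg(2)[OF K_anti A_sym B_anti, where up="vplus k N xs (dc t) l" and um="vminus k xs (dc t) l" and du="jump k N xs Dc l" and vp="vplus k N xs (db t) l" and vm="vminus k xs (db t) l" and dv="jump k N xs Db l"]
  have vm: "vminus k xs (dc t) j = pv k (dc t j) b" "vminus k xs (db t) j = pv k (db t j) b"
    unfolding vminus_def b_def by simp_all
  have vp: "vplus k N xs (dc t) l = pv k (dc t j) a" "vplus k N xs (db t) l = pv k (db t j) a"
    unfolding vplus_def a_def lj by simp_all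
  have jmp: "jump k N xs (dc t) r = vplus k N xs (dc t) r - vminus k xs (dc t) r"
     "jump k N xs (db t) r = vplus k N xs (db t) r - vminus k xs (db t) r" for r
    unfolding jump_def by simp_all
  have IR': "(K *v pv k (dc t j) b) \<bullet> pv k (db t j) b - fu j \<bullet> pv k (db t j) b + fv j \<bullet> pv k (dc t j) b
     + (1/2) * ((B *v jump k N xs Db j) \<bullet> jump k N xs (dc t) j + (B *v jump k N xs (db t) j) \<bullet> jump k N xs Dc j)
     = Fcal k N xs K A B dc db t j"
    using IR by (simp only: fu_eq fv_eq Fc jmp vm)
  have IL': "- ((K *v pv k (dc t j) a) \<bullet> pv k (db t j) a) + fu l \<bullet> pv k (db t j) a - fv l \<bullet> pv k (dc t j) a
     + (1/2) * ((B *v jump k N xs Db l) \<bullet> jump k N xs (dc t) l + (B *v jump k N xs (db t) l) \<bullet> jump k N xs Dc l)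
     = - Fcal k N xs K A B dc db t l"
    using IL by (simp only: fu_eq fv_eq Fc jmp vp)
  show "((\<lambda>s. omega k N xs M B dc db s j) has_real_derivative
       (Fcal k N xs K A B dc db t j - Fcal k N xs K A B dc db t (leftif N j))) (at t)"
  proof -
    have "(integral {a..b} (\<lambda>x. (M *v pv k (Dc j) x) \<bullet> pv k (db t j) x)
    + integral {a..b} (\<lambda>x. (M *v pv k (dc t j) x) \<bullet> pv k (Db j) x)
    + (1/2) * ((B *v jump k N xs Db j) \<bullet> jump k N xs (dc t) j + (B *v jump k N xs (db t) j) \<bullet> jump k N xs Dc j)
    + (1/2) * ((B *v jump k N xs Db l) \<bullet> jump k N xs (dc t) l
             + (B *v jump k N xs (db t) l) \<bullet> jump k N xs Dc l))
      = Fcal k N xs K A B dc db t j - Fcal k N xs K A B dc db t l"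
      using E1 E2 H' FTC AK AM IR' IL' by linarith
    then show ?thesis using OD unfolding l_def a_def b_def by simp
  qed
qed

end
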